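(* Let $Q_\infty=(q_0,q_1,q_2,\dots)$ be an infinite stochastic vector with positive coordinates, fix a GLS-expansion with cylinder lengths given by $Q_\infty$, and let $V=\{i_1,i_2,\dots,i_k,i_{k+1},\dots\}\subset\mathbb{N}_0$ be an infinite set. If the equation $\sum_{i\in V} q_i^x=1$ has no roots on $[0,1]$, then \[\dim_H\bigl(C[\mathit{GLS},V]\bigr)=\lim_{k\to\infty}\dim_H\bigl(C[\mathit{GLS},V_k]\bigr),\] where $V_k=\{i_1,i_2,\dots,i_k\}$, $k\in\mathbb{N}$, $k\ge 2$.
   Context: GLS-expansion: Let $Q_\infty=(q_0,q_1,\dots)$ be a stochastic vector with positive coordinates ($q_i>0$, $\sum_{i\ge 0} q_i=1$). Choose closed intervals $\Delta_i=[a_i,b_i]\subset[0,1]$, $i\in\mathbb{N}_0$, with pairwise disjoint interiors and $|\Delta_i|=q_i$ (cylinders of rank 1). Let $f_i:[0,1]\to\Delta_i$ be the increasing affine bijection. The cylinders of rank $n$ are $\Delta_{i_1i_2\dots i_n}=f_{i_1}\circ\dots\circ f_{i_n}([0,1])$, so the placement of $\Delta_{i_1\dots i_n}$ inside $\Delta_{i_1\dots i_{n-1}}$ is the same as that of $\Delta_{i_n}$ inside $[0,1]$ and $|\Delta_{i_1\dots i_n}|=q_{i_1}\cdots q_{i_n}$. For any sequence $(i_k)$ in $\mathbb{N}_0$, $\bigcap_k \Delta_{i_1\dots i_k}$ is a single point, denoted $\Delta^{\mathit{GLS}}_{i_1i_2\dots}$. For $W\subset\mathbb{N}_0$, $C[\mathit{GLS},W]=\{\Delta^{\mathit{GLS}}_{\alpha_1\alpha_2\dots}:\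 \alpha_k\in W \text{ for all } k\}$. *)

theory Defs
  imports "HOL-Analysis.Analysis"
begin

definition diam_pow :: "real \<Rightarrow> real set \<Rightarrow> real" where
  "diam_pow s U = (if U = {} then 0 else if s = 0 then 1 else diameter U powr s)"

definition hausdorff_content :: "real \<Rightarrow> real \<Rightarrow> real set \<Rightarrow> ennreal" where
  "hausdorff_content s \<delta> A =
     (INF U \<in> {U :: nat \<Rightarrow> real set. A \<subseteq> (\<Union>n. U n) \<and> (\<forall>n. bounded (U n) \<and> diameter (U n) \<le> \<delta>)}.
        (\<Sum>n. ennreal (diam_pow s (U n))))"

definition hausdorff_measure :: "real \<Rightarrow> real set \<Rightarrow> ennreal" where
  "hausdorff_measure s A = (SUP \<delta> \<in> {0<..}. hausdorff_content s \<delta> A)"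

definition hausdorff_dim :: "real set \<Rightarrow> real" where
  "hausdorff_dim A = Inf {s. 0 \<le> s \<and> hausdorff_measure s A = 0}"

definition gls_map :: "(nat \<Rightarrow> real) \<Rightarrow> (nat \<Rightarrow> real) \<Rightarrow> nat \<Rightarrow> real \<Rightarrow> real" where
  "gls_map q a i x = a i + q i * x"

text \<open>Cylinder Delta_{i1...in} = f_{i1} o ... o f_{in} ([0,1]).\<close>
definition gls_cyl :: "(nat \<Rightarrow> real) \<Rightarrow> (nat \<Rightarrow> real) \<Rightarrow> nat list \<Rightarrow> real set" where
  "gls_cyl q a ws = (foldr (\<lambda>i g. gls_map q a i \<circ> g) ws id) ` {0..1}"

text \<open>The point Delta^GLS_{alpha_1 alpha_2 ...}: the unique point of the nested intersection
  (the sequence alpha is indexed from 0 here).\<close>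
definition gls_point :: "(nat \<Rightarrow> real) \<Rightarrow> (nat \<Rightarrow> real) \<Rightarrow> (nat \<Rightarrow> nat) \<Rightarrow> real" where
  "gls_point q a \<alpha> = (THE x. x \<in> (\<Inter>n. gls_cyl q a (map \<alpha> [0..<n])))"

definition gls_C :: "(nat \<Rightarrow> real) \<Rightarrow> (nat \<Rightarrow> real) \<Rightarrow> nat set \<Rightarrow> real set" where
  "gls_C q a W = {gls_point q a \<alpha> | \<alpha>. \<forall>k. \<alpha> k \<in> W}"

definition gls_system :: "(nat \<Rightarrow> real) \<Rightarrow> (nat \<Rightarrow> real) \<Rightarrow> bool" where
  "gls_system q a \<longleftrightarrow>
     (\<forall>i. 0 < q i) \<and> q sums 1 \<and>
     (\<forall>i. {a i .. a i + q i} \<subseteq> {0..1}) \<and>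
     (\<forall>i j. i \<noteq> j \<longrightarrow> {a i <..< a i + q i} \<inter> {a j <..< a j + q j} = {})"

end

theory Submission
  imports Defs "HOL-Library.Sublist"
begin


definition cQ :: "(nat \<Rightarrow> real) \<Rightarrow> nat list \<Rightarrow> real" where
  "cQ q w = prod_list (map q w)"

fun cA :: "(nat \<Rightarrow> real) \<Rightarrow> (nat \<Rightarrow> real) \<Rightarrow> nat list \<Rightarrow> real" where
  "cA q a [] = 0"
| "cA q a (i # w) = a i + q i * cA q a w"

lemma cQ_simps[simp]: "cQ q [] = 1" "cQ q (i # w) = q i * cQ q w" "cQ q (u @ v) = cQ q u * cQ q v"
  by (auto simp: cQ_def)

lemma foldr_gls: "foldr (\<lambda>i g. gls_map q a i \<circ> g) w id x = cA q a w + cQ q w * x"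
  by (induction w arbitrary: x) (auto simp: gls_map_def algebra_simps)

locale gls =
  fixes q a :: "nat \<Rightarrow> real"
  assumes sys: "gls_system q a"
begin

lemma qpos: "0 < q i" using sys by (auto simp: gls_system_def)

lemma sub01: "{a i .. a i + q i} \<subseteq> {0..1}" using sys by (auto simp: gls_system_def)

lemma a_nonneg: "0 \<le> a i" and aq_le: "a i + q i \<le> 1"
  using sub01[of i] qpos[of i] by auto

lemma disj: "i \<noteq> j \<Longrightarrow> {a i <..< a i + q i} \<inter> {a j <..< a j + q j} = {}"
  using sys by (auto simp: gls_system_def)

lemma qsums: "q sums 1" using sys by (auto simp: gls_system_def)

lemma cQ_pos: "0 < cQ q w"
  by (induction w) (auto simp: qpos)

lemma cyl_eq: "gls_cyl q a w = {cA q a w .. cA q a w + cQ q w}"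
proof -
  have "gls_cyl q a w = (\<lambda>x. cQ q w * x + cA q a w) ` {0..1}"
    by (simp add: gls_cyl_def foldr_gls[abs_def] image_def add.commute)
  thus ?thesis using cQ_pos[of w] by (simp add: image_affinity_atLeastAtMost)
qed

lemma cyl_01: "0 \<le> cA q a w \<and> cA q a w + cQ q w \<le> 1"
proof (induction w)
  case (Cons i w)
  have "a i + q i * cA q a w \<ge> 0" using a_nonneg[of i] qpos[of i] Cons by simp
  moreover have "a i + q i * cA q a w + q i * cQ q w \<le> 1"
  proof -
    have "q i * (cA q a w + cQ q w) \<le> q i * 1"
      using Cons qpos[of i] by (intro mult_left_mono) auto
    thus ?thesis using aq_le[of i] by (simp add: algebra_simps)
  qed
  ultimately show ?case by (simp add: algebra_simps)
qed simp

lemma cA_append: "cA q a (u @ v) = cA q a u + cQ q u * cA q a v"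
  by (induction u) (auto simp: algebra_simps)

lemma cyl_append_sub: "gls_cyl q a (u @ v) \<subseteq> gls_cyl q a u"
proof -
  have "cA q a u \<le> cA q a u + cQ q u * cA q a v"
    using cyl_01[of v] cQ_pos[of u] by simp
  moreover have "cA q a u + cQ q u * cA q a v + cQ q u * cQ q v \<le> cA q a u + cQ q u"
  proof -
    have "cQ q u * (cA q a v + cQ q v) \<le> cQ q u * 1"
      using cyl_01[of v] cQ_pos[of u] by (intro mult_left_mono) auto
    thus ?thesis by (simp add: algebra_simps)
  qed
  ultimately show ?thesis by (auto simp: cyl_eq cA_append)
qed

lemma cyl_prefix_sub: "prefix u w \<Longrightarrow> gls_cyl q a w \<subseteq> gls_cyl q a u"
  by (auto simp: prefix_def dest!: cyl_append_sub[THEN subsetD] )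

definition c0 where "c0 = max (1 - q 0) (1 - q 1)"

lemma two_le: "i \<noteq> j \<Longrightarrow> q i + q j \<le> 1"
proof -
  assume "i \<noteq> j"
  have "sum q {i,j} \<le> suminf q"
    using qsums qpos by (intro sum_le_suminf) (auto simp: sums_iff less_imp_le)
  thus ?thesis using \<open>i \<noteq> j\<close> qsums by (simp add: sums_iff)
qed

lemma q_le_c0: "q i \<le> c0"
  using two_le[of i 0] two_le[of i 1] by (cases "i = 0") (auto simp: c0_def)

lemma c0_lt1: "c0 < 1" and c0_pos: "0 < c0"
  using qpos[of 0] qpos[of 1] q_le_c0[of 0] by (auto simp: c0_def)

lemma cQ_le: "cQ q w \<le> c0 ^ length w"
proof (induction w)
  case (Cons i w)
  show ?case using Cons q_le_c0[of i] qpos[of i] cQ_pos[of w]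
    by (simp add: mult_mono)
qed simp

end


context gls
begin

lemma small_pow: "0 < \<epsilon> \<Longrightarrow> \<exists>n. \<forall>m\<ge>n. c0 ^ m < \<epsilon>"
proof -
  assume "0 < \<epsilon>"
  then obtain n where "c0 ^ n < \<epsilon>" using real_arch_pow_inv c0_lt1 by blast
  moreover have "\<And>m. m \<ge> n \<Longrightarrow> c0 ^ m \<le> c0 ^ n"
    using c0_pos c0_lt1 by (intro power_decreasing) auto
  ultimately show ?thesis by (meson le_less_trans)
qed

lemma prefix_map_upt: "n \<le> m \<Longrightarrow> prefix (map \<alpha> [0..<n]) (map \<alpha> [0..<m])"
proof -
  assume "n \<le> m"
  then obtain k where "m = n + k" using le_Suc_ex by blast
  hence "map \<alpha> [0..<m] = map \<alpha> [0..<n] @ map \<alpha> [n..<n+k]"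
    using upt_add_eq_append[of 0 n k] by simp
  thus ?thesis unfolding prefix_def by blast
qed

lemma point_in: "gls_point q a \<alpha> \<in> gls_cyl q a (map \<alpha> [0..<n])"
proof -
  let ?S = "\<lambda>n. gls_cyl q a (map \<alpha> [0..<n])"
  have "\<exists>x. \<Inter>(range ?S) = {x}"
  proof (rule decreasing_closed_nest_sing)
    show "closed (?S n)" for n by (simp add: cyl_eq)
    show "?S n \<noteq> {}" for n using cQ_pos[of "map \<alpha> [0..<n]"] by (simp add: cyl_eq)
    show "?S n \<subseteq> ?S m" if "m \<le> n" for m n
      by (rule cyl_prefix_sub[OF prefix_map_upt[OF that]])
    show "\<exists>n. \<forall>x\<in>?S n. \<forall>y\<in>?S n. dist x y < \<epsilon>" if eps: "\<epsilon> > 0" for \<epsilon>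
    proof -
      obtain n where n: "c0 ^ n < \<epsilon>" using small_pow[OF eps] by auto
      have "cQ q (map \<alpha> [0..<n]) < \<epsilon>" using cQ_le[of "map \<alpha> [0..<n]"] n by simp
      thus ?thesis by (intro exI[of _ n]) (auto simp: cyl_eq dist_real_def)
    qed
  qed
  then obtain x where x: "\<Inter>(range ?S) = {x}" by blast
  have "gls_point q a \<alpha> = x" unfolding gls_point_def x
    by simp
  thus ?thesis using x by blast
qed

lemma point_near: "x \<in> gls_cyl q a w \<Longrightarrow> y \<in> gls_cyl q a w \<Longrightarrow> \<bar>x - y\<bar> \<le> cQ q w"
  by (auto simp: cyl_eq)

end


definition words :: "nat set \<Rightarrow> nat \<Rightarrow> nat list set" where
  "words F n = {w. set w \<subseteq> F \<and> length w = n}"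

lemma words_Suc: "words F (Suc n) = (\<lambda>(i,w). i # w) ` (F \<times> words F n)"
  by (auto simp: words_def length_Suc_conv image_def)

lemma finite_words: "finite F \<Longrightarrow> finite (words F n)"
  unfolding words_def by (rule finite_lists_length_eq)

lemma sum_words:
  fixes g :: "nat \<Rightarrow> real"
  assumes "finite F"
  shows "(\<Sum>w\<in>words F n. prod_list (map g w)) = (sum g F) ^ n"
proof (induction n)
  case 0
  have "words F 0 = {[]}" by (auto simp: words_def)
  thus ?case by simp
next
  case (Suc n)
  have inj: "inj_on (\<lambda>(i,w). i # w) (F \<times> words F n)" by (auto simp: inj_on_def)
  have "(\<Sum>w\<in>words F (Suc n). prod_list (map g w))
      = (\<Sum>x\<in>F \<times> words F n. prod_list (map g ((\<lambda>(i,w). i # w) x)))"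
    unfolding words_Suc by (rule sum.reindex[OF inj, unfolded comp_def])
  also have "\<dots> = (\<Sum>(i,w)\<in>F \<times> words F n. g i * prod_list (map g w))"
    by (simp add: case_prod_beta)
  also have "\<dots> = (\<Sum>i\<in>F. \<Sum>w\<in>words F n. g i * prod_list (map g w))"
    by (rule sum.cartesian_product[symmetric])
  also have "\<dots> = (\<Sum>i\<in>F. g i) * (\<Sum>w\<in>words F n. prod_list (map g w))"
    by (rule sum_product[symmetric])
  finally show ?case using Suc by simp
qed

definition nu :: "(nat \<Rightarrow> real) \<Rightarrow> real \<Rightarrow> nat list \<Rightarrow> real" where
  "nu q s w = prod_list (map (\<lambda>i. q i powr s) w)"

lemma diam_pow_empty[simp]: "diam_pow s {} = 0" by (simp add: diam_pow_def)

lemma nu_simps[simp]: "nu q s [] = 1" "nu q s (i # w) = q i powr s * nu q s w"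
  "nu q s (u @ v) = nu q s u * nu q s v"
  by (auto simp: nu_def)

context gls
begin

lemma nu_eq: "nu q s w = cQ q w powr s"
  by (induction w) (auto simp: powr_mult qpos less_imp_le cQ_pos)

lemma nu_nonneg: "0 \<le> nu q s w" by (simp add: nu_eq)

lemma diam_pow_cyl: "0 \<le> t \<Longrightarrow> diam_pow t (gls_cyl q a w) = nu q t w"
  using cQ_pos[of w] by (auto simp: diam_pow_def cyl_eq nu_eq)

lemma cyl_bounded: "bounded (gls_cyl q a w)" by (simp add: cyl_eq)

lemma diam_cyl: "diameter (gls_cyl q a w) = cQ q w"
  using cQ_pos[of w] by (simp add: cyl_eq)

lemma upper_content:
  assumes t: "0 \<le> t" and c: "0 \<le> c" "c < 1" and \<delta>: "0 < \<delta>"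
    and F: "\<And>F. finite F \<Longrightarrow> F \<subseteq> W \<Longrightarrow> (\<Sum>i\<in>F. q i powr t) \<le> c"
  shows "hausdorff_content t \<delta> (gls_C q a W) = 0"
proof (rule antisym[OF ennreal_le_epsilon], simp_all)
  fix \<epsilon> :: real assume "0 < \<epsilon>"
  obtain n1 where n1: "c0 ^ n1 < \<delta>" using real_arch_pow_inv[OF \<delta> c0_lt1] by blast
  obtain n2 where n2: "c ^ n2 < \<epsilon>" using real_arch_pow_inv[OF \<open>0<\<epsilon>\<close> c(2)] by blast
  define n where "n = max n1 n2"
  have "c0 ^ n \<le> c0 ^ n1" unfolding n_def using c0_pos c0_lt1 by (intro power_decreasing) auto
  with n1 have n1': "c0 ^ n < \<delta>" by simp
  have "c ^ n \<le> c ^ n2" unfolding n_def using c by (intro power_decreasing) auto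
  with n2 have n2': "c ^ n < \<epsilon>" by simp
  define good where "good m \<longleftrightarrow> m \<in> range (to_nat :: nat list \<Rightarrow> nat) \<and>
      (from_nat m :: nat list) \<in> words W n" for m
  define U where "U m = (if good m then gls_cyl q a (from_nat m) else {})" for m
  have cover: "gls_C q a W \<subseteq> (\<Union>m. U m)"
  proof
    fix x assume "x \<in> gls_C q a W"
    then obtain \<alpha> where x: "x = gls_point q a \<alpha>" and \<alpha>: "\<forall>k. \<alpha> k \<in> W"
      by (auto simp: gls_C_def)
    define w where "w = map \<alpha> [0..<n]"
    have "w \<in> words W n" using \<alpha> by (auto simp: words_def w_def)
    hence "good (to_nat w)" by (auto simp: good_def)
    hence "U (to_nat w) = gls_cyl q a w" by (simp add: U_def)
    thus "x \<in> (\<Union>m. U m)" using point_in[of \<alpha> n] x w_def by blast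
  qed
  have Ub: "bounded (U m) \<and> diameter (U m) \<le> \<delta>" for m
  proof (cases "good m")
    case True
    hence "length (from_nat m :: nat list) = n" by (auto simp: good_def words_def)
    hence "cQ q (from_nat m) \<le> c0 ^ n" using cQ_le by metis
    thus ?thesis using True n1' by (simp add: U_def cyl_bounded diam_cyl)
  qed (use \<delta> in \<open>simp add: U_def\<close>)
  have "hausdorff_content t \<delta> (gls_C q a W) \<le> (\<Sum>m. ennreal (diam_pow t (U m)))"
    unfolding hausdorff_content_def using cover Ub by (intro INF_lower) auto
  also have "\<dots> \<le> ennreal (c ^ n)"
  proof (rule suminf_le_const[OF summableI])
    fix N
    define P where "P = (from_nat :: nat \<Rightarrow> nat list) ` {m \<in> {..<N}. good m}"
    define L where "L = \<Union>(set ` P)"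
    have finP: "finite P" by (simp add: P_def)
    have finL: "finite L" using finP by (simp add: L_def)
    have LW: "L \<subseteq> W" by (auto simp: L_def P_def good_def words_def)
    have PL: "P \<subseteq> words L n" by (auto simp: L_def P_def good_def words_def)
    have inj: "inj_on (from_nat :: nat \<Rightarrow> nat list) {m \<in> {..<N}. good m}"
      by (auto simp: inj_on_def good_def)
    have "(\<Sum>m<N. ennreal (diam_pow t (U m))) = ennreal (\<Sum>m<N. diam_pow t (U m))"
      by (rule sum_ennreal) (auto simp: diam_pow_def U_def)
    also have "(\<Sum>m<N. diam_pow t (U m)) = (\<Sum>m<N. if good m then nu q t (from_nat m) else 0)"
      by (rule sum.cong) (auto simp: U_def diam_pow_cyl[OF t])
    also have "\<dots> = (\<Sum>m\<in>{m \<in> {..<N}. good m}. nu q t (from_nat m))"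
      by (rule sum.inter_filter[symmetric]) simp
    also have "\<dots> = (\<Sum>w\<in>P. nu q t w)"
      unfolding P_def by (rule sum.reindex[OF inj, unfolded comp_def, symmetric])
    also have "\<dots> \<le> (\<Sum>w\<in>words L n. nu q t w)"
      by (rule sum_mono2[OF finite_words[OF finL] PL]) (simp add: nu_nonneg)
    also have "\<dots> = (\<Sum>i\<in>L. q i powr t) ^ n"
      unfolding nu_def by (rule sum_words[OF finL])
    also have "\<dots> \<le> c ^ n"
      by (rule power_mono[OF F[OF finL LW]]) (simp add: sum_nonneg)
    finally show "(\<Sum>m<N. ennreal (diam_pow t (U m))) \<le> ennreal (c ^ n)"
      by (simp add: ennreal_leI)
  qed
  also have "\<dots> \<le> ennreal \<epsilon>" using n2' by (simp add: ennreal_leI)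
  finally show "hausdorff_content t \<delta> (gls_C q a W) \<le> ennreal \<epsilon>" .
qed

lemma upper:
  assumes t: "0 \<le> t" and c: "0 \<le> c" "c < 1"
    and F: "\<And>F. finite F \<Longrightarrow> F \<subseteq> W \<Longrightarrow> (\<Sum>i\<in>F. q i powr t) \<le> c"
  shows "hausdorff_measure t (gls_C q a W) = 0"
  unfolding hausdorff_measure_def using upper_content[OF t c _ F] by simp

end


context gls
begin

definition Io where "Io w = {cA q a w <..< cA q a w + cQ q w}"

lemma cQ_le1: "cQ q w \<le> 1"
  using cQ_le[of w] c0_pos c0_lt1 power_le_one[of c0 "length w"] by linarith

lemma Io_sub_cyl: "Io w \<subseteq> gls_cyl q a w" by (auto simp: Io_def cyl_eq)

lemma Io_append_sub: "Io (u @ v) \<subseteq> Io u"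
proof -
  have "gls_cyl q a (u @ v) \<subseteq> gls_cyl q a u" by (rule cyl_append_sub)
  moreover have "cQ q (u @ v) > 0" by (rule cQ_pos)
  ultimately show ?thesis unfolding cyl_eq Io_def
    by (auto simp del: cQ_simps)
qed

lemma Io_child_disj:
  assumes "i \<noteq> j"
  shows "Io (p @ [i]) \<inter> Io (p @ [j]) = {}"
proof (rule ccontr)
  assume "Io (p @ [i]) \<inter> Io (p @ [j]) \<noteq> {}"
  then obtain z where z: "z \<in> Io (p @ [i])" "z \<in> Io (p @ [j])" by blast
  define y where "y = (z - cA q a p) / cQ q p"
  have Qp: "cQ q p > 0" by (rule cQ_pos)
  have zy: "z = cA q a p + cQ q p * y" using Qp by (simp add: y_def)
  have "y \<in> {a i <..< a i + q i}" "y \<in> {a j <..< a j + q j}"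
    using z Qp unfolding Io_def cA_append zy
    by (auto simp: algebra_simps) (metis mult_less_cancel_right_pos Qp distrib_right)+
  thus False using disj[OF assms] by blast
qed

lemma Io_parallel_disj:
  assumes "u \<parallel> v"
  shows "Io u \<inter> Io v = {}"
proof -
  obtain p i x j y where "i \<noteq> j" "u = p @ i # x" "v = p @ j # y"
    using parallel_decomp[OF assms] by blast
  moreover have "Io (p @ i # x) \<subseteq> Io (p @ [i])" using Io_append_sub[of "p @ [i]" x] by simp
  moreover have "Io (p @ j # y) \<subseteq> Io (p @ [j])" using Io_append_sub[of "p @ [j]" y] by simp
  ultimately show ?thesis using Io_child_disj[of i j p] by blast
qed

definition Amin :: "nat set \<Rightarrow> real \<Rightarrow> real \<Rightarrow> nat list set" where
  "Amin W \<rho> c = {u. set u \<subseteq> W \<and> u \<noteq> [] \<and> cQ q u \<le> \<rho> \<and> \<rho> < cQ q (butlast u)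
       \<and> gls_cyl q a u \<inter> {c <..< c + \<rho>} \<noteq> {}}"

lemma Amin_parallel:
  assumes "u \<in> Amin W \<rho> c" "v \<in> Amin W \<rho> c" "u \<noteq> v"
  shows "u \<parallel> v"
proof -
  have *: False if "u' \<in> Amin W \<rho> c" "v' \<in> Amin W \<rho> c" "u' \<noteq> v'" "prefix u' v'" for u' v'
  proof -
    note H = that
    obtain x where x: "v' = u' @ x" "x \<noteq> []" using H(3,4) by (auto simp: prefix_def)
    have "butlast v' = u' @ butlast x" using x by (simp add: butlast_append)
    hence "cQ q (butlast v') = cQ q u' * cQ q (butlast x)" by simp
    also have "\<dots> \<le> cQ q u'" using cQ_le1[of "butlast x"] cQ_pos[of u'] by (simp add: mult_left_le)
    also have "\<dots> \<le> \<rho>" using H(1) by (simp add: Amin_def)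
    finally show False using H(2) by (simp add: Amin_def)
  qed
  show ?thesis using *[of u v] *[of v u] assms by (auto intro: parallelI)
qed

end


context gls
begin

lemma Amin_cQ_lower:
  assumes u: "u \<in> Amin W \<rho> c" and \<rho>: "0 < \<rho>" and qm: "\<And>i. i \<in> W \<Longrightarrow> qmin \<le> q i" and "0 < qmin"
  shows "\<rho> * qmin < cQ q u"
proof -
  have ne: "u \<noteq> []" and b: "\<rho> < cQ q (butlast u)" and W: "set u \<subseteq> W"
    using u by (auto simp: Amin_def)
  have "u = butlast u @ [last u]" using ne by simp
  hence "cQ q u = cQ q (butlast u) * q (last u)" by (metis cQ_simps(2,3) mult.right_neutral cQ_simps(1))
  moreover have "qmin \<le> q (last u)" by (meson qm W ne last_in_set subsetD)
  moreover have "\<rho> * qmin < cQ q (butlast u) * qmin" using b \<open>0 < qmin\<close> by simp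
  moreover have "cQ q (butlast u) * qmin \<le> cQ q (butlast u) * q (last u)"
    using \<open>qmin \<le> q (last u)\<close> cQ_pos[of "butlast u"] by simp
  ultimately show ?thesis by linarith
qed

lemma Amin_finite:
  assumes "finite W" and \<rho>: "0 < \<rho>" and qm: "\<And>i. i \<in> W \<Longrightarrow> qmin \<le> q i" and "0 < qmin"
  shows "finite (Amin W \<rho> c)"
proof -
  obtain n0 where n0: "c0 ^ n0 < \<rho> * qmin"
    using real_arch_pow_inv[of "\<rho> * qmin" c0] \<rho> \<open>0 < qmin\<close> c0_lt1 by auto
  have "Amin W \<rho> c \<subseteq> {u. set u \<subseteq> W \<and> length u \<le> n0}"
  proof
    fix u assume u: "u \<in> Amin W \<rho> c"
    have "length u \<le> n0"
    proof (rule ccontr)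
      assume "\<not> length u \<le> n0"
      hence "c0 ^ length u \<le> c0 ^ n0" using c0_pos c0_lt1 by (intro power_decreasing) auto
      thus False using Amin_cQ_lower[OF u \<rho> qm \<open>0 < qmin\<close>] cQ_le[of u] n0 by linarith
    qed
    thus "u \<in> {u. set u \<subseteq> W \<and> length u \<le> n0}" using u by (auto simp: Amin_def)
  qed
  thus ?thesis using finite_lists_length_le[OF \<open>finite W\<close>] finite_subset by blast
qed

lemma measure_Io: "measure lborel (Io w) = cQ q w"
  using cQ_pos[of w] by (simp add: Io_def)

lemma Amin_sum_cQ:
  assumes "finite W" and \<rho>: "0 < \<rho>" and qm: "\<And>i. i \<in> W \<Longrightarrow> qmin \<le> q i" and "0 < qmin"
  shows "(\<Sum>u\<in>Amin W \<rho> c. cQ q u) \<le> 3 * \<rho>"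
proof -
  let ?A = "Amin W \<rho> c"
  have fin: "finite ?A" by (rule Amin_finite[OF assms])
  have dj: "disjoint_family_on Io ?A"
    unfolding disjoint_family_on_def using Amin_parallel Io_parallel_disj by blast
  have "(\<Sum>u\<in>?A. cQ q u) = (\<Sum>u\<in>?A. measure lborel (Io u))" by (simp add: measure_Io)
  also have "\<dots> = measure lborel (\<Union>u\<in>?A. Io u)"
    by (rule measure_finite_Union[symmetric, OF fin _ dj]) (auto simp: Io_def less_imp_le[OF cQ_pos])
  also have "\<dots> \<le> measure lborel {c - \<rho> .. c + 2 * \<rho>}"
  proof (rule measure_mono_fmeasurable)
    show "(\<Union>u\<in>?A. Io u) \<subseteq> {c - \<rho> .. c + 2 * \<rho>}"
    proof (clarify)
      fix u x assume u: "u \<in> ?A" and x: "x \<in> Io u"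
      obtain y where y: "y \<in> gls_cyl q a u" "c < y" "y < c + \<rho>" using u by (auto simp: Amin_def)
      have "cQ q u \<le> \<rho>" using u by (simp add: Amin_def)
      moreover have "x \<in> gls_cyl q a u" using x Io_sub_cyl by blast
      ultimately show "x \<in> {c - \<rho> .. c + 2 * \<rho>}" using y point_near[of x u y] by auto
    qed
    show "(\<Union>u\<in>?A. Io u) \<in> sets lborel" using fin by (auto simp: Io_def)
    show "{c - \<rho> .. c + 2 * \<rho>} \<in> fmeasurable lborel" using \<rho> by (simp add: fmeasurable_def)
  qed
  also have "\<dots> = 3 * \<rho>" using \<rho> by simp
  finally show ?thesis .
qed

lemma Amin_card:
  assumes "finite W" and \<rho>: "0 < \<rho>" and qm: "\<And>i. i \<in> W \<Longrightarrow> qmin \<le> q i" and "0 < qmin"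
  shows "real (card (Amin W \<rho> c)) \<le> 3 / qmin"
proof -
  have "real (card (Amin W \<rho> c)) * (\<rho> * qmin) = (\<Sum>u\<in>Amin W \<rho> c. \<rho> * qmin)" by simp
  also have "\<dots> \<le> (\<Sum>u\<in>Amin W \<rho> c. cQ q u)"
    using Amin_cQ_lower[OF _ \<rho> qm \<open>0 < qmin\<close>] by (intro sum_mono) (simp add: less_imp_le)
  also have "\<dots> \<le> 3 * \<rho>" by (rule Amin_sum_cQ[OF assms])
  finally have "real (card (Amin W \<rho> c)) * qmin * \<rho> \<le> 3 * \<rho>" by (simp add: algebra_simps)
  hence "real (card (Amin W \<rho> c)) * qmin \<le> 3" using \<rho> by simp
  thus ?thesis using \<open>0 < qmin\<close> by (simp add: field_simps)
qed

lemma Amin_nu: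
  assumes "finite W" and \<rho>: "0 < \<rho>" and qm: "\<And>i. i \<in> W \<Longrightarrow> qmin \<le> q i" and "0 < qmin"
    and s: "0 \<le> s"
  shows "(\<Sum>u\<in>Amin W \<rho> c. nu q s u) \<le> 3 / qmin * \<rho> powr s"
proof -
  have "(\<Sum>u\<in>Amin W \<rho> c. nu q s u) \<le> (\<Sum>u\<in>Amin W \<rho> c. \<rho> powr s)"
    using cQ_pos s by (intro sum_mono) (auto simp: nu_eq Amin_def less_imp_le[OF cQ_pos] intro!: powr_mono2)
  also have "\<dots> = real (card (Amin W \<rho> c)) * \<rho> powr s" by simp
  also have "\<dots> \<le> 3 / qmin * \<rho> powr s"
    using Amin_card[of W \<rho> qmin c] assms by (intro mult_right_mono) auto
  finally show ?thesis .
qed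

end


fun branch :: "(nat list \<Rightarrow> nat) \<Rightarrow> nat \<Rightarrow> nat list" where
  "branch ch 0 = []"
| "branch ch (Suc n) = branch ch n @ [ch (branch ch n)]"

lemma branch_eq: "branch ch n = map (\<lambda>k. ch (branch ch k)) [0..<n]"
  by (induction n) auto

context gls
begin

lemma konig:
  assumes finW: "finite W" and cov: "gls_C q a W \<subseteq> (\<Union>n. J n)" and op: "\<And>n. open (J n)"
  shows "\<exists>m. \<forall>w\<in>words W m. \<exists>v. prefix v w \<and> (\<exists>n. gls_cyl q a v \<subseteq> J n)"
proof (rule ccontr)
  define G where "G v \<longleftrightarrow> (\<exists>n. gls_cyl q a v \<subseteq> J n)" for v
  assume "\<not> ?thesis"
  hence H: "\<forall>m. \<exists>w\<in>words W m. \<forall>v. prefix v w \<longrightarrow> \<not> G v" by (auto simp: G_def)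
  define bad where "bad v \<longleftrightarrow> set v \<subseteq> W \<and>
      (\<forall>m. \<exists>u. set u \<subseteq> W \<and> m \<le> length u \<and> (\<forall>p. prefix p (v @ u) \<longrightarrow> \<not> G p))" for v
  have bad0: "bad []"
    unfolding bad_def
  proof (intro conjI allI)
    fix m
    obtain w where "w \<in> words W m" "\<forall>v. prefix v w \<longrightarrow> \<not> G v" using H by blast
    thus "\<exists>u. set u \<subseteq> W \<and> m \<le> length u \<and> (\<forall>p. prefix p ([] @ u) \<longrightarrow> \<not> G p)"
      by (intro exI[of _ w]) (auto simp: words_def)
  qed simp
  have step: "\<exists>i\<in>W. bad (v @ [i])" if bv: "bad v" for v
  proof -
    have vW: "set v \<subseteq> W" using bv by (simp add: bad_def)
    have "\<forall>m. \<exists>u. set u \<subseteq> W \<and> Suc m \<le> length u \<and> (\<forall>p. prefix p (v @ u) \<longrightarrow> \<not> G p)"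
      using bv unfolding bad_def by blast
    then obtain U where U: "\<And>m. set (U m) \<subseteq> W \<and> Suc m \<le> length (U m) \<and>
        (\<forall>p. prefix p (v @ U m) \<longrightarrow> \<not> G p)"
      by metis
    define f where "f m = hd (U m)" for m
    have Une: "U m \<noteq> []" for m using U[of m] by auto
    have fW: "f m \<in> W" for m using U[of m] Une[of m] unfolding f_def by (meson hd_in_set subsetD)
    have "finite (range f)" using fW finW by (meson finite_subset image_subsetI)
    then obtain i where i: "i \<in> range f" "infinite (f -` {i})"
      by (rule inf_img_fin_domE) simp
    have iW: "i \<in> W" using i(1) fW by auto
    have "bad (v @ [i])"
      unfolding bad_def
    proof (intro conjI allI)
      show "set (v @ [i]) \<subseteq> W" using vW iW by simp
      fix m
      obtain m' where m': "m' \<ge> m" "m' \<in> f -` {i}" using i(2) infinite_nat_iff_unbounded_le by blast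
      have Ueq: "U m' = i # tl (U m')" using m'(2) Une[of m'] unfolding f_def by (metis hd_Cons_tl vimage_singleton_eq)
      show "\<exists>u. set u \<subseteq> W \<and> m \<le> length u \<and> (\<forall>p. prefix p ((v @ [i]) @ u) \<longrightarrow> \<not> G p)"
      proof (intro exI[of _ "tl (U m')"] conjI)
        show "set (tl (U m')) \<subseteq> W" using U[of m'] by (meson list.set_sel(2) Une subsetD subsetI)
        show "m \<le> length (tl (U m'))" using conjunct1[OF conjunct2[OF U[of m']]] m'(1) by simp
        have "(v @ [i]) @ tl (U m') = v @ U m'" using Ueq by (metis append_Cons append_assoc append_Nil)
        thus "\<forall>p. prefix p ((v @ [i]) @ tl (U m')) \<longrightarrow> \<not> G p" using U[of m'] by simp
      qed
    qed
    thus ?thesis using iW by blast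
  qed
  define ch where "ch v = (SOME i. i \<in> W \<and> bad (v @ [i]))" for v
  have bb: "bad (branch ch n)" for n
  proof (induction n)
    case (Suc n)
    have "\<exists>i. i \<in> W \<and> bad (branch ch n @ [i])" using step[OF Suc] by blast
    hence "ch (branch ch n) \<in> W \<and> bad (branch ch n @ [ch (branch ch n)])"
      unfolding ch_def by (rule someI_ex)
    thus ?case by simp
  qed (simp add: bad0)
  define \<alpha> where "\<alpha> k = ch (branch ch k)" for k
  have br: "branch ch n = map \<alpha> [0..<n]" for n unfolding \<alpha>_def by (rule branch_eq)
  have \<alpha>W: "\<alpha> k \<in> W" for k
    using bb[of "Suc k"] by (simp add: bad_def \<alpha>_def)
  define x where "x = gls_point q a \<alpha>"
  have "x \<in> gls_C q a W" using \<alpha>W unfolding x_def gls_C_def by blast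
  then obtain n where xn: "x \<in> J n" using cov by blast
  then obtain \<epsilon> where \<epsilon>: "\<epsilon> > 0" "ball x \<epsilon> \<subseteq> J n" using op[of n] openE by blast
  obtain m where m: "c0 ^ m < \<epsilon>" using real_arch_pow_inv[OF \<epsilon>(1) c0_lt1] by blast
  have "gls_cyl q a (map \<alpha> [0..<m]) \<subseteq> ball x \<epsilon>"
  proof
    fix y assume y: "y \<in> gls_cyl q a (map \<alpha> [0..<m])"
    have "\<bar>y - x\<bar> \<le> cQ q (map \<alpha> [0..<m])" using point_near[OF y point_in] x_def by simp
    also have "\<dots> \<le> c0 ^ m" using cQ_le[of "map \<alpha> [0..<m]"] by simp
    finally show "y \<in> ball x \<epsilon>" using m by (simp add: dist_real_def abs_minus_commute)
  qed
  hence "G (branch ch m)" using \<epsilon>(2) br by (auto simp: G_def)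
  moreover obtain u where "\<forall>p. prefix p (branch ch m @ u) \<longrightarrow> \<not> G p"
    using bb[of m] unfolding bad_def by blast
  ultimately show False by simp
qed

end


lemma powr_sum_bound:
  fixes r l s :: real
  assumes "0 \<le> r" "0 < l" "0 < s"
  shows "(2 * r + 2 * l) powr s \<le> 4 powr s * (r powr s + l powr s)"
proof -
  define M where "M = max r l"
  have M0: "0 < M" using assms by (simp add: M_def)
  have "(2 * r + 2 * l) powr s \<le> (4 * M) powr s"
    using assms by (intro powr_mono2) (auto simp: M_def)
  also have "\<dots> = 4 powr s * M powr s" using M0 by (simp add: powr_mult)
  also have "M powr s \<le> r powr s + l powr s"
    by (cases "r \<le> l") (auto simp: M_def max_def)
  hence "4 powr s * M powr s \<le> 4 powr s * (r powr s + l powr s)" by simp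
  finally show ?thesis .
qed

context gls
begin

lemma ext_sum:
  assumes "finite W" "set u \<subseteq> W" "length u \<le> m"
  shows "(\<Sum>w\<in>{w\<in>words W m. prefix u w}. nu q s w) = nu q s u * (\<Sum>i\<in>W. q i powr s) ^ (m - length u)"
proof -
  have eq: "{w\<in>words W m. prefix u w} = (\<lambda>x. u @ x) ` words W (m - length u)"
  proof (intro equalityI subsetI)
    fix w assume "w \<in> {w\<in>words W m. prefix u w}"
    then obtain x where "w = u @ x" "set w \<subseteq> W" "length w = m" by (auto simp: words_def prefix_def)
    thus "w \<in> (\<lambda>x. u @ x) ` words W (m - length u)" by (auto simp: words_def)
  next
    fix w assume "w \<in> (\<lambda>x. u @ x) ` words W (m - length u)"
    thus "w \<in> {w\<in>words W m. prefix u w}" using assms by (auto simp: words_def)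
  qed
  have "(\<Sum>w\<in>{w\<in>words W m. prefix u w}. nu q s w) = (\<Sum>x\<in>words W (m - length u). nu q s (u @ x))"
    unfolding eq by (rule sum.reindex[unfolded comp_def]) (simp add: inj_on_def)
  also have "\<dots> = nu q s u * (\<Sum>x\<in>words W (m - length u). nu q s x)"
    by (simp add: sum_distrib_left)
  also have "(\<Sum>x\<in>words W (m - length u). nu q s x) = (\<Sum>i\<in>W. q i powr s) ^ (m - length u)"
    unfolding nu_def by (rule sum_words[OF assms(1)])
  finally show ?thesis .
qed

lemma lower_content:
  assumes finW: "finite W" and s: "0 < s" and S1: "1 \<le> (\<Sum>i\<in>W. q i powr s)"
  defines "qmin \<equiv> Min (q ` W)"
  shows "ennreal (1 / (2 * (3 / qmin) * 4 powr s)) \<le> hausdorff_content s (1/16) (gls_C q a W)"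
proof -
  define S where "S = (\<Sum>i\<in>W. q i powr s)"
  have Wne: "W \<noteq> {}" using S1 by auto
  have qmin_pos: "0 < qmin" unfolding qmin_def using finW Wne qpos by (subst Min_gr_iff) auto
  have qm: "qmin \<le> q i" if "i \<in> W" for i unfolding qmin_def using finW that by simp
  define M where "M = 3 / qmin"
  have M0: "0 < M" using qmin_pos by (simp add: M_def)
  define \<theta> where "\<theta> = 1 / (2 * M * 4 powr s)"
  have \<theta>0: "0 < \<theta>" using M0 by (simp add: \<theta>_def)
  show ?thesis
    unfolding hausdorff_content_def M_def[symmetric] \<theta>_def[symmetric]
  proof (rule INF_greatest, clarify)
    fix U :: "nat \<Rightarrow> real set"
    assume cov: "gls_C q a W \<subseteq> (\<Union>n. U n)" and Ub: "\<forall>n. bounded (U n) \<and> diameter (U n) \<le> 1/16"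
    define r where "r n = diameter (U n)" for n
    have r0: "0 \<le> r n" for n by (simp add: r_def diameter_ge_0 Ub)
    have r16: "r n \<le> 1/16" for n using Ub by (simp add: r_def)
    define xc where "xc n = (SOME x. x \<in> U n)" for n
    define lam where "lam n = min (1/16) ((\<theta> / 2 ^ Suc n) powr (1/s))" for n
    have lam0: "0 < lam n" for n using \<theta>0 by (simp add: lam_def)
    have lam16: "lam n \<le> 1/16" for n by (simp add: lam_def)
    have lams: "lam n powr s \<le> \<theta> / 2 ^ Suc n" for n
    proof -
      have "lam n powr s \<le> ((\<theta> / 2 ^ Suc n) powr (1/s)) powr s"
        using lam0[of n] s by (intro powr_mono2) (auto simp: lam_def)
      also have "\<dots> = \<theta> / 2 ^ Suc n" using s \<theta>0 by (simp add: powr_powr)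
      finally show ?thesis .
    qed
    define \<rho> where "\<rho> n = 2 * r n + 2 * lam n" for n
    define cc where "cc n = xc n - r n - lam n" for n
    define J where "J n = (if U n = {} then {} else {cc n <..< cc n + \<rho> n})" for n
    have \<rho>0: "0 < \<rho> n" for n using r0[of n] lam0[of n] by (simp add: \<rho>_def)
    have \<rho>4: "\<rho> n \<le> 1/4" for n using r16[of n] lam16[of n] by (simp add: \<rho>_def)
    have Jopen: "open (J n)" for n by (simp add: J_def)
    have UJ: "U n \<subseteq> J n" for n
    proof
      fix y assume y: "y \<in> U n"
      hence ne: "U n \<noteq> {}" by auto
      have xcU: "xc n \<in> U n" unfolding xc_def using y by (rule someI)
      have "dist y (xc n) \<le> r n" unfolding r_def using Ub y xcU by (intro diameter_bounded_bound) auto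
      thus "y \<in> J n" using ne lam0[of n] by (auto simp: J_def cc_def \<rho>_def dist_real_def abs_le_iff)
    qed
    have covJ: "gls_C q a W \<subseteq> (\<Union>n. J n)" using cov UJ by blast
    obtain m where m: "\<forall>w\<in>words W m. \<exists>v. prefix v w \<and> (\<exists>n. gls_cyl q a v \<subseteq> J n)"
      using konig[OF finW covJ Jopen] by blast
    have ex: "\<exists>n u. u \<in> Amin W (\<rho> n) (cc n) \<and> prefix u w \<and> U n \<noteq> {}" if w: "w \<in> words W m" for w
    proof -
      obtain v n where v: "prefix v w" "gls_cyl q a v \<subseteq> J n" using m w by blast
      have cne: "gls_cyl q a v \<noteq> {}" using cQ_pos[of v] by (simp add: cyl_eq)
      hence Une: "U n \<noteq> {}" using v(2) by (auto simp: J_def split: if_splits)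
      hence Jn: "J n = {cc n <..< cc n + \<rho> n}" by (simp add: J_def)
      have "cA q a v \<in> gls_cyl q a v" "cA q a v + cQ q v \<in> gls_cyl q a v"
        using cQ_pos[of v] by (auto simp: cyl_eq)
      hence "cA q a v \<in> {cc n <..< cc n + \<rho> n}" "cA q a v + cQ q v \<in> {cc n <..< cc n + \<rho> n}"
        using v(2) Jn by blast+
      hence cQv: "cQ q v < \<rho> n" by simp
      define P where "P k \<longleftrightarrow> cQ q (take k v) \<le> \<rho> n" for k
      define k where "k = (LEAST k. P k)"
      have Pv: "P (length v)" using cQv by (simp add: P_def)
      have Pk: "P k" unfolding k_def using Pv by (rule LeastI)
      have kle: "k \<le> length v" unfolding k_def using Pv by (rule Least_le)
      have k0: "k \<noteq> 0"
      proof
        assume "k = 0"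
        hence "cQ q (take k v) = 1" by simp
        thus False using Pk \<rho>4[of n] by (simp add: P_def)
      qed
      define u where "u = take k v"
      have une: "u \<noteq> []" using k0 kle by (cases v) (auto simp: u_def)
      have "\<not> P (k - 1)" unfolding k_def using k0 by (intro not_less_Least) (simp add: k_def)
      hence bl: "\<rho> n < cQ q (butlast u)" using kle by (simp add: P_def u_def butlast_take)
      have puv: "prefix u v" by (simp add: u_def take_is_prefix)
      have puw: "prefix u w" using puv v(1) by (rule prefix_order.trans)
      have uW: "set u \<subseteq> W" using puw w by (auto simp: words_def dest!: set_mono_prefix)
      have "gls_cyl q a v \<subseteq> gls_cyl q a u" by (rule cyl_prefix_sub[OF puv])
      hence "gls_cyl q a u \<inter> {cc n <..< cc n + \<rho> n} \<noteq> {}" using v(2) Jn cne by blast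
      hence "u \<in> Amin W (\<rho> n) (cc n)" using uW une Pk bl by (simp add: Amin_def P_def u_def)
      thus ?thesis using puw Une by blast
    qed
    obtain nn uu where nu_w: "\<And>w. w \<in> words W m \<Longrightarrow> uu w \<in> Amin W (\<rho> (nn w)) (cc (nn w)) \<and> prefix (uu w) w \<and> U (nn w) \<noteq> {}"
    proof -
      have "\<forall>w\<in>words W m. \<exists>p. snd p \<in> Amin W (\<rho> (fst p)) (cc (fst p)) \<and> prefix (snd p) w \<and> U (fst p) \<noteq> {}"
        using ex by simp
      then obtain g where g: "\<forall>w\<in>words W m. snd (g w) \<in> Amin W (\<rho> (fst (g w))) (cc (fst (g w))) \<and> prefix (snd (g w)) w \<and> U (fst (g w)) \<noteq> {}"
        by (rule bchoice[THEN exE]) blast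
      show ?thesis by (rule that[where nn="\<lambda>w. fst (g w)" and uu="\<lambda>w. snd (g w)"]) (use g in blast)
    qed
    define R where "R = (\<lambda>w. (nn w, uu w)) ` words W m"
    have finR: "finite R" by (simp add: R_def finite_words[OF finW])
    have Rprop: "set (snd x) \<subseteq> W \<and> length (snd x) \<le> m \<and> snd x \<in> Amin W (\<rho> (fst x)) (cc (fst x)) \<and> U (fst x) \<noteq> {}"
      if xR: "x \<in> R" for x
    proof -
      obtain w where w: "w \<in> words W m" "x = (nn w, uu w)" using xR by (auto simp: R_def)
      have "prefix (uu w) w" using nu_w[OF w(1)] by simp
      hence "set (uu w) \<subseteq> set w" "length (uu w) \<le> length w"
        by (auto simp: set_mono_prefix prefix_length_le)
      thus ?thesis using w nu_w[OF w(1)] by (auto simp: words_def)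
    qed
    have S0: "0 < S" using S1 by (simp add: S_def)
    have "S ^ m = (\<Sum>w\<in>words W m. nu q s w)"
      unfolding S_def nu_def by (rule sum_words[OF finW, symmetric])
    also have "\<dots> = (\<Sum>x\<in>R. \<Sum>w\<in>{w. w \<in> words W m \<and> (nn w, uu w) = x}. nu q s w)"
      unfolding R_def by (rule sum.image_gen[OF finite_words[OF finW]])
    also have "\<dots> \<le> (\<Sum>x\<in>R. \<Sum>w\<in>{w\<in>words W m. prefix (snd x) w}. nu q s w)"
    proof (rule sum_mono, rule sum_mono2)
      fix x assume "x \<in> R"
      show "finite {w\<in>words W m. prefix (snd x) w}" using finite_words[OF finW] by simp
      show "{w. w \<in> words W m \<and> (nn w, uu w) = x} \<subseteq> {w\<in>words W m. prefix (snd x) w}"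
        using nu_w by auto
      show "\<And>b. b \<in> {w\<in>words W m. prefix (snd x) w} - {w. w \<in> words W m \<and> (nn w, uu w) = x} \<Longrightarrow>
          0 \<le> nu q s b" by (simp add: nu_nonneg)
    qed
    also have "\<dots> = (\<Sum>x\<in>R. nu q s (snd x) * S ^ (m - length (snd x)))"
      using Rprop unfolding S_def by (intro sum.cong refl ext_sum[OF finW]) auto
    also have "\<dots> \<le> (\<Sum>x\<in>R. nu q s (snd x) * S ^ m)"
      using S1 unfolding S_def by (intro sum_mono mult_left_mono power_increasing) (auto simp: nu_nonneg)
    also have "\<dots> = S ^ m * (\<Sum>x\<in>R. nu q s (snd x))"
      by (simp add: sum_distrib_left mult.commute)
    finally have one: "1 \<le> (\<Sum>x\<in>R. nu q s (snd x))" using S0 by simp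
    define N' where "N' = fst ` R"
    define A' where "A' n = Amin W (\<rho> n) (cc n)" for n
    have finN: "finite N'" using finR by (simp add: N'_def)
    have finA: "finite (A' n)" for n
      unfolding A'_def using finW \<rho>0 qm qmin_pos by (intro Amin_finite) auto
    have RS: "R \<subseteq> Sigma N' A'"
    proof
      fix x assume xR: "x \<in> R"
      have "fst x \<in> N'" using xR by (simp add: N'_def)
      moreover have "snd x \<in> A' (fst x)" using Rprop[OF xR] by (simp add: A'_def)
      ultimately show "x \<in> Sigma N' A'" by (cases x) simp
    qed
    have "(\<Sum>x\<in>R. nu q s (snd x)) \<le> (\<Sum>x\<in>Sigma N' A'. nu q s (snd x))"
      by (rule sum_mono2[OF finite_SigmaI[OF finN finA] RS]) (simp add: nu_nonneg)
    also have "\<dots> = (\<Sum>n\<in>N'. \<Sum>u\<in>A' n. nu q s u)"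
      by (subst sum.Sigma[OF finN]) (auto simp: finA case_prod_beta)
    also have "\<dots> \<le> (\<Sum>n\<in>N'. M * \<rho> n powr s)"
      unfolding A'_def M_def using finW \<rho>0 qm qmin_pos s
      by (intro sum_mono Amin_nu) auto
    also have "\<dots> \<le> (\<Sum>n\<in>N'. M * 4 powr s * r n powr s + M * 4 powr s * \<theta> * (1/2) ^ Suc n)"
    proof (rule sum_mono)
      fix n
      have "\<rho> n powr s \<le> 4 powr s * (r n powr s + lam n powr s)"
        unfolding \<rho>_def by (rule powr_sum_bound[OF r0 lam0 s])
      also have "\<dots> \<le> 4 powr s * (r n powr s + \<theta> / 2 ^ Suc n)"
        using lams[of n] by (intro mult_left_mono) auto
      finally have "M * \<rho> n powr s \<le> M * (4 powr s * (r n powr s + \<theta> / 2 ^ Suc n))"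
        using M0 by (intro mult_left_mono) auto
      moreover have "M * (4 powr s * (r n powr s + \<theta> / 2 ^ Suc n))
          = M * 4 powr s * r n powr s + M * 4 powr s * \<theta> * (1/2) ^ Suc n"
        by (simp add: power_one_over algebra_simps)
      ultimately show "M * \<rho> n powr s \<le> M * 4 powr s * r n powr s + M * 4 powr s * \<theta> * (1/2) ^ Suc n"
        by linarith
    qed
    also have "\<dots> = M * 4 powr s * (\<Sum>n\<in>N'. r n powr s) + M * 4 powr s * \<theta> * (\<Sum>n\<in>N'. (1/2) ^ Suc n)"
      by (simp only: sum.distrib sum_distrib_left)
    also have "(\<Sum>n\<in>N'. (1/2::real) ^ Suc n) \<le> 1"
    proof -
      have "(\<Sum>n\<in>N'. (1/2::real) ^ Suc n) \<le> (\<Sum>n. (1/2::real) ^ Suc n)"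
        using power_half_series finN by (intro sum_le_suminf) (auto simp: sums_iff)
      thus ?thesis using power_half_series by (simp add: sums_iff)
    qed
    hence "M * 4 powr s * \<theta> * (\<Sum>n\<in>N'. (1/2) ^ Suc n) \<le> M * 4 powr s * \<theta> * 1"
      using M0 \<theta>0 by (intro mult_left_mono) auto
    finally have "1 \<le> M * 4 powr s * (\<Sum>n\<in>N'. r n powr s) + M * 4 powr s * \<theta>"
      using one by linarith
    moreover have "M * 4 powr s * \<theta> = 1/2" using M0 by (simp add: \<theta>_def)
    ultimately have "1/2 \<le> M * 4 powr s * (\<Sum>n\<in>N'. r n powr s)" by linarith
    hence key: "\<theta> \<le> (\<Sum>n\<in>N'. r n powr s)"
      using M0 by (simp add: \<theta>_def field_simps)
    have Une': "U n \<noteq> {}" if "n \<in> N'" for n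
      using that Rprop by (auto simp: N'_def)
    have "ennreal \<theta> \<le> ennreal (\<Sum>n\<in>N'. diam_pow s (U n))"
      using key Une' s by (intro ennreal_leI) (simp add: diam_pow_def r_def)
    also have "\<dots> = (\<Sum>n\<in>N'. ennreal (diam_pow s (U n)))"
      by (rule sum_ennreal[symmetric]) (simp add: diam_pow_def)
    also have "\<dots> \<le> (\<Sum>n. ennreal (diam_pow s (U n)))"
      by (rule sum_le_suminf[OF summableI finN]) simp
    finally show "ennreal \<theta> \<le> (\<Sum>n. ennreal (diam_pow s (U n)))" .
  qed
qed

end


lemma powr_gap:
  fixes x c t t' :: real
  assumes "0 < x" "x \<le> c" "t \<le> t'"
  shows "(1/c) powr (t' - t) * x powr t' \<le> x powr t"
proof -
  have c0: "0 < c" using assms by simp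
  have "(1/c) powr (t' - t) \<le> (1/x) powr (t' - t)"
    using assms c0 by (intro powr_mono2) (auto simp: field_simps)
  hence "(1/c) powr (t' - t) * x powr t' \<le> (1/x) powr (t' - t) * x powr t'"
    by (intro mult_right_mono) auto
  also have "(1/x) powr (t' - t) * x powr t' = x powr t"
    using assms(1) by (simp add: powr_def ln_div exp_add[symmetric] algebra_simps)
  finally show ?thesis .
qed

lemma hcontent_mono: "A \<subseteq> B \<Longrightarrow> hausdorff_content s \<delta> A \<le> hausdorff_content s \<delta> B"
  unfolding hausdorff_content_def by (rule INF_superset_mono) auto

lemma hmeasure_mono: "A \<subseteq> B \<Longrightarrow> hausdorff_measure s A \<le> hausdorff_measure s B"
  unfolding hausdorff_measure_def by (rule SUP_mono) (use hcontent_mono in blast)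

lemma gls_C_mono: "W \<subseteq> W' \<Longrightarrow> gls_C q a W \<subseteq> gls_C q a W'"
  unfolding gls_C_def by blast

context gls
begin

lemma lower:
  assumes finW: "finite W" and s: "0 \<le> s" and S1: "1 \<le> (\<Sum>i\<in>W. q i powr s)"
  shows "hausdorff_measure s (gls_C q a W) \<noteq> 0"
proof (cases "s = 0")
  case False
  hence s0: "0 < s" using s by simp
  define qmin where "qmin = Min (q ` W)"
  have Wne: "W \<noteq> {}" using S1 by auto
  have qmin_pos: "0 < qmin" unfolding qmin_def using finW Wne qpos by (subst Min_gr_iff) auto
  have "0 < ennreal (1 / (2 * (3 / qmin) * 4 powr s))"
    using qmin_pos by simp
  also have "\<dots> \<le> hausdorff_content s (1/16) (gls_C q a W)"
    unfolding qmin_def by (rule lower_content[OF finW s0 S1])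
  also have "\<dots> \<le> hausdorff_measure s (gls_C q a W)"
    unfolding hausdorff_measure_def by (rule SUP_upper) simp
  finally show ?thesis by simp
next
  case True
  have Wne: "W \<noteq> {}" using S1 by auto
  then obtain i where i: "i \<in> W" by blast
  define x where "x = gls_point q a (\<lambda>_. i)"
  have xC: "x \<in> gls_C q a W" using i unfolding x_def gls_C_def by blast
  have "1 \<le> hausdorff_content 0 (1/16) (gls_C q a W)"
    unfolding hausdorff_content_def
  proof (rule INF_greatest, clarify)
    fix U :: "nat \<Rightarrow> real set"
    assume cov: "gls_C q a W \<subseteq> (\<Union>n. U n)"
    then obtain n where "x \<in> U n" using xC by blast
    hence "diam_pow 0 (U n) = 1" by (auto simp: diam_pow_def)
    hence "(\<Sum>j\<in>{n}. ennreal (diam_pow 0 (U j))) = 1" by simp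
    moreover have "(\<Sum>j\<in>{n}. ennreal (diam_pow 0 (U j))) \<le> (\<Sum>j. ennreal (diam_pow 0 (U j)))"
      by (rule sum_le_suminf[OF summableI]) auto
    ultimately show "1 \<le> (\<Sum>j. ennreal (diam_pow 0 (U j)))" by simp
  qed
  also have "\<dots> \<le> hausdorff_measure 0 (gls_C q a W)"
    unfolding hausdorff_measure_def by (rule SUP_upper) simp
  finally show ?thesis using True by auto
qed

end


theorem theorem2:
  fixes q a :: "nat \<Rightarrow> real" and V :: "nat set" and e :: "nat \<Rightarrow> nat"
  assumes "gls_system q a"
    and "infinite V"
    and "bij_betw e UNIV V"
    and "\<not> (\<exists>x\<in>{0..1}. ((\<lambda>i. q i powr x) has_sum 1) V)"
  shows "(\<lambda>k. hausdorff_dim (gls_C q a (e ` {..<k}))) \<longlonglongrightarrow> hausdorff_dim (gls_C q a V)"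
proof -
  interpret gls q a by standard (rule assms(1))
  have Ve: "V = range e" using assms(3) by (simp add: bij_betw_def)
  define Z where "Z X = {s. 0 \<le> s \<and> hausdorff_measure s X = 0}" for X
  define C where "C = gls_C q a V"
  define Ck where "Ck k = gls_C q a (e ` {..<k})" for k
  have CkC: "Ck k \<subseteq> C" for k unfolding Ck_def C_def Ve by (rule gls_C_mono) auto
  define T where "T = {t. 0 \<le> t \<and> (\<exists>c. 0 \<le> c \<and> c < 1 \<and>
      (\<forall>F. finite F \<and> F \<subseteq> V \<longrightarrow> (\<Sum>i\<in>F. q i powr t) \<le> c))}"
  have T1: "1 \<in> T"
  proof -
    have q0: "\<And>i. 0 \<le> q i" using qpos less_imp_le by blast
    have hq: "(q has_sum 1) UNIV" by (rule sums_nonneg_imp_has_sum[OF qsums q0])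
    have sU: "q summable_on UNIV" using hq by (rule has_sum_imp_summable)
    have sV: "q summable_on V" by (rule summable_on_subset_banach[OF sU]) simp
    define c where "c = infsum q V"
    have c1: "c \<le> 1"
    proof -
      have "infsum q V \<le> infsum q UNIV" by (rule infsum_mono_neutral[OF sV sU]) (auto simp: q0)
      thus ?thesis using hq by (simp add: c_def infsumI)
    qed
    have cne: "c \<noteq> 1"
    proof
      assume "c = 1"
      hence "(q has_sum 1) V" using has_sum_infsum[OF sV] by (simp add: c_def)
      moreover have "(\<lambda>i. q i powr 1) = q" using q0 by (simp add: abs_of_nonneg)
      ultimately have "((\<lambda>i. q i powr 1) has_sum 1) V" by (simp only:)
      moreover have "(1::real) \<in> {0..1}" by simp
      ultimately show False using assms(4) by blast
    qed
    have cF: "(\<Sum>i\<in>F. q i powr 1) \<le> c" if "finite F" "F \<subseteq> V" for F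
    proof -
      have "infsum q F \<le> infsum q V"
        using that by (intro infsum_mono_neutral[OF _ sV]) (auto simp: q0)
      thus ?thesis using that q0 by (simp add: c_def abs_of_nonneg)
    qed
    have "0 \<le> c" unfolding c_def by (rule infsum_nonneg) (simp add: q0)
    moreover have "\<forall>F. finite F \<and> F \<subseteq> V \<longrightarrow> (\<Sum>i\<in>F. q i powr 1) \<le> c" using cF by blast
    moreover have "c < 1" using c1 cne by simp
    ultimately show ?thesis unfolding T_def by (intro CollectI conjI exI[of _ c]) auto
  qed
  have T0: "\<And>t. t \<in> T \<Longrightarrow> 0 \<le> t" by (simp add: T_def)
  have TZ: "T \<subseteq> Z C"
  proof
    fix t assume "t \<in> T"
    then obtain c where "0 \<le> t" "0 \<le> c" "c < 1" "\<And>F. finite F \<Longrightarrow> F \<subseteq> V \<Longrightarrow> (\<Sum>i\<in>F. q i powr t) \<le> c"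
      by (auto simp: T_def)
    hence "hausdorff_measure t (gls_C q a V) = 0" by (intro upper) auto
    thus "t \<in> Z C" unfolding Z_def C_def using \<open>0 \<le> t\<close> by blast
  qed
  have ZCk: "Z C \<subseteq> Z (Ck k)" for k
  proof
    fix s assume "s \<in> Z C"
    hence "0 \<le> s" "hausdorff_measure s C = 0" by (auto simp: Z_def)
    moreover have "hausdorff_measure s (Ck k) \<le> hausdorff_measure s C" by (rule hmeasure_mono[OF CkC])
    ultimately show "s \<in> Z (Ck k)" by (simp add: Z_def)
  qed
  have bddZ: "bdd_below (Z X)" for X unfolding Z_def by (rule bdd_belowI[of _ 0]) auto
  have ZCne: "Z C \<noteq> {}" using TZ T1 by blast
  define d where "d = Inf (Z C)"
  define dk where "dk k = Inf (Z (Ck k))" for k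
  define ts where "ts = Inf T"
  have d_le: "d \<le> ts" unfolding d_def ts_def using T1 bddZ TZ by (intro cInf_superset_mono) auto
  have dk_le: "dk k \<le> d" for k unfolding d_def dk_def using ZCne bddZ ZCk by (intro cInf_superset_mono) auto
  have dk0: "0 \<le> dk k" for k unfolding dk_def using ZCne ZCk[of k] by (intro cInf_greatest) (auto simp: Z_def)
  have ev: "\<exists>K. \<forall>k\<ge>K. t \<le> dk k" if t0: "0 \<le> t" and tts: "t < ts" for t
  proof -
    define t' where "t' = (t + ts) / 2"
    have tt': "t < t'" "t' < ts" using tts by (auto simp: t'_def)
    have "t' \<notin> T"
    proof
      assume "t' \<in> T"
      hence "ts \<le> t'" unfolding ts_def by (intro cInf_lower) (auto intro: bdd_belowI[of _ 0] simp: T_def)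
      thus False using tt' by simp
    qed
    hence noc: "\<not> (\<exists>c. 0 \<le> c \<and> c < 1 \<and> (\<forall>F. finite F \<and> F \<subseteq> V \<longrightarrow> (\<Sum>i\<in>F. q i powr t') \<le> c))"
      using t0 tt' unfolding T_def by auto
    define \<rho> where "\<rho> = (1 / c0) powr (t' - t)"
    have \<rho>1: "1 < \<rho>" unfolding \<rho>_def using c0_pos c0_lt1 tt' by (intro gr_one_powr) auto
    have "\<exists>F. finite F \<and> F \<subseteq> V \<and> 1 / \<rho> < (\<Sum>i\<in>F. q i powr t')"
    proof (rule ccontr)
      assume "\<not> ?thesis"
      hence "\<forall>F. finite F \<and> F \<subseteq> V \<longrightarrow> (\<Sum>i\<in>F. q i powr t') \<le> 1 / \<rho>"
        by (auto simp: not_less)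
      moreover have "0 \<le> 1 / \<rho>" "1 / \<rho> < 1" using \<rho>1 by auto
      ultimately show False using noc by blast
    qed
    then obtain F where F: "finite F" "F \<subseteq> V" "1 / \<rho> < (\<Sum>i\<in>F. q i powr t')"
      by blast
    have "1 < \<rho> * (\<Sum>i\<in>F. q i powr t')" using F(3) \<rho>1 by (simp add: field_simps)
    also have "\<dots> = (\<Sum>i\<in>F. \<rho> * q i powr t')" by (simp add: sum_distrib_left)
    also have "\<dots> \<le> (\<Sum>i\<in>F. q i powr t)"
      unfolding \<rho>_def using tt' by (intro sum_mono powr_gap qpos q_le_c0) auto
    finally have Ft: "1 < (\<Sum>i\<in>F. q i powr t)" .
    obtain G where G: "G \<subseteq> UNIV" "finite G" "F = e ` G"
      using finite_subset_image[OF F(1) F(2)[unfolded Ve]] by blast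
    obtain K where K: "G \<subseteq> {..<K}" using finite_nat_bounded[OF G(2)] by blast
    have "t \<le> dk k" if kK: "k \<ge> K" for k
    proof -
      have Fk: "F \<subseteq> e ` {..<k}" using G(3) K kK by auto
      have "s \<notin> Z (Ck k)" if s0: "0 \<le> s" and st: "s < t" for s
      proof -
        have "(\<Sum>i\<in>F. q i powr t) \<le> (\<Sum>i\<in>F. q i powr s)"
        proof (rule sum_mono)
          fix i
          have "q i \<le> 1" using q_le_c0[of i] c0_lt1 by linarith
          thus "q i powr t \<le> q i powr s" using st qpos[of i] by (intro powr_mono') auto
        qed
        also have "\<dots> \<le> (\<Sum>i\<in>e ` {..<k}. q i powr s)"
          by (rule sum_mono2[OF _ Fk]) auto
        finally have "1 \<le> (\<Sum>i\<in>e ` {..<k}. q i powr s)" using Ft by simp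
        hence "hausdorff_measure s (Ck k) \<noteq> 0" unfolding Ck_def by (intro lower s0) auto
        thus ?thesis by (simp add: Z_def)
      qed
      moreover have "Z (Ck k) \<noteq> {}" using ZCne ZCk[of k] by blast
      ultimately show ?thesis unfolding dk_def
        by (intro cInf_greatest) (auto simp: Z_def not_less[symmetric])
    qed
    thus ?thesis by blast
  qed
  have d0: "0 \<le> d" using dk0[of 0] dk_le[of 0] by simp
  have d_eq: "d = ts"
  proof (rule ccontr)
    assume "d \<noteq> ts"
    hence "d < ts" using d_le by simp
    then obtain K where "\<forall>k\<ge>K. (d + ts)/2 \<le> dk k" using ev[of "(d + ts)/2"] d0 by auto
    hence "(d + ts)/2 \<le> dk K" by simp
    thus False using dk_le[of K] \<open>d < ts\<close> by simp
  qed
  have "dk \<longlonglongrightarrow> d"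
  proof (rule order_tendstoI)
    fix y assume "y < d"
    show "eventually (\<lambda>k. y < dk k) sequentially"
    proof (cases "y < 0")
      case True
      hence "\<And>k. y < dk k" using dk0 less_le_trans by blast
      thus ?thesis by simp
    next
      case False
      then obtain K where "\<forall>k\<ge>K. (y + d)/2 \<le> dk k" using ev[of "(y + d)/2"] \<open>y < d\<close> d_eq by auto
      moreover have "y < (y + d)/2" using \<open>y < d\<close> by simp
      ultimately show ?thesis unfolding eventually_sequentially
        by (intro exI[of _ K]) (auto intro: less_le_trans)
    qed
  next
    fix y assume "d < y"
    hence "\<And>k. dk k < y" using dk_le le_less_trans by blast
    thus "eventually (\<lambda>k. dk k < y) sequentially" by simp
  qed
  thus ?thesis unfolding dk_def d_def Z_def Ck_def C_def hausdorff_dim_def .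
qed



end
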